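(* Assume the noise-free case $M=I_n$, $N=0$ (so $Q=I_n$, $R(\mathcal D)=X_+-BU_-$ and $\Sigma(\mathcal D)=\{A\in\mathbb{R}^{n\times n}: X_+-BU_-=AX_-\}$), and assume $\Sigma(\mathcal D)\neq\varnothing$. Let $\mathcal F$ be the set of all $v\in\mathbb{R}^T$ such that $v\in\big(\mathcal J^*(\mathcal D)^\perp\cap\ker(CX_-)\big)\setminus\{0\}$ and $X_+v\notin X_+\mathcal J^*(\mathcal D)$. For $\lambda\in\mathbb{C}$ and $v\in\mathcal F$, define the perturbation $\Delta\mathcal D(\lambda,v):=(\Delta_{X_-},\Delta_{X_+},\Delta_{U_-},\Delta_{Y_-})$ with $\Delta_{X_-}=0$, $\Delta_{U_-}=0$, $\Delta_{Y_-}=0$ and $$\Delta_{X_+}:=(\lambda X_--X_++BU_-)v\,\zeta^\mathsf{T},\qquad \zeta:=\frac{\operatorname{proj}_{\mathcal S_+}(v)}{\|\operatorname{proj}_{\mathcal S_+}(v)\|_2^2},$$ so that $\|\Delta\mathcal D(\lambda,v)\|_{\mathrm F}^2=\|\Delta_{X_+}\|_{\mathrm F}^2=\|(\lambda X_--X_++BU_-)v\|_2^2/\|\operatorname{proj}_{\mathcal S_+}(v)\|_2^2$. Then $$\inf_{\lambda\in\mathbb{C},\,v\in\mathcal F}\|\Delta\mathcal D(\lambda,v)\|_{\mathrm F}\ \ge\ d_{\mathrm{UNOBS}}(\Sigma(\mathcal D))\,\sigma_{\min}(X_-).$$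
   Context: Setting. Let $n,m,p,T$ be positive integers, $B\in\mathbb{R}^{n\times m}$, $C\in\mathbb{R}^{p\times n}$, $D\in\mathbb{R}^{p\times m}$, and let $\mathcal D=(X_-,X_+,U_-,Y_-)$ be data with $X_-,X_+\in\mathbb{R}^{n\times T}$, $U_-\in\mathbb{R}^{m\times T}$, $Y_-\in\mathbb{R}^{p\times T}$. With $M=I_n$, $N=0$: $P(\mathcal D)=X_-$, $Q=I_n$, $R(\mathcal D)=X_+-BU_-$. The maximum weakly unobservable coefficient space $\mathcal J^*(\mathcal D)$ is the largest subspace $\mathcal J\subseteq\mathbb{R}^T$ satisfying $$\begin{bmatrix}R(\mathcal D)\\ CP(\mathcal D)\end{bmatrix}\mathcal J\subseteq \big(QP(\mathcal D)\mathcal J\big)\times\{0\}+\operatorname{im}\begin{bmatrix}QB\\ D\end{bmatrix}.$$ $\mathcal S_+:=\mathcal J^*(\mathcal D)^\perp\cap\operatorname{im}(X_+^\mathsf{T})$, and $\operatorname{proj}_{\mathcal S_+}$ is orthogonal projection onto it. For $A\in\mathbb{R}^{n\times n}$, $d_{\mathrm{UNOBS}}(A):=\inf_{\lambda\in\mathbb{C}}\sigma_{\min}\!\left(\begin{bmatrix}\lambda I_n-A\\ C\end{bmatrix}\right)$, where $\sigma_{\min}$ of this $(n+p)\times n$ complex matrix is its smallest ($n$-th) singular value, and $d_{\mathrm{UNOBS}}(\Sigma(\mathcal D)):=\inf_{A\in\Sigma(\mathcal D)}d_{\mathrm{UNOBS}}(A)$. $\sigma_{\min}(X_-)$ denotes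 the smallest of the $\min(n,T)$ singular values of $X_-$. The infimum over an empty set is $+\infty$. *)

theory Defs
  imports "HOL-Analysis.Analysis"
begin

text \<open>Matrices are rendered with type-indexed dimensions: an n x T matrix is
  real^'t^'n (rows indexed by 'n, columns by 't).\<close>

definition orth_compl :: "('a::real_inner) set \<Rightarrow> 'a set" where
  "orth_compl S = {x. \<forall>y\<in>S. inner x y = 0}"

definition orth_proj :: "('a::real_inner) set \<Rightarrow> 'a \<Rightarrow> 'a" where
  "orth_proj S v = (THE w. w \<in> S \<and> (\<forall>s\<in>S. inner (v - w) s = 0))"

text \<open>Conditional-invariance condition defining weakly unobservable coefficient
  spaces, with M = I, N = 0: P = X_-, Q = I, R = X_+ - B U_-.\<close>
definition wu_cond ::
  "real^'t^'n \<Rightarrow> real^'t^'n \<Rightarrow> real^'t^'m \<Rightarrow> real^'m^'n \<Rightarrow> real^'n^'p \<Rightarrow> real^'m^'p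
   \<Rightarrow> (real^'t) set \<Rightarrow> bool" where
  "wu_cond Xm Xp U B C D J \<longleftrightarrow>
     (\<forall>j\<in>J. \<exists>j'\<in>J. \<exists>u.
        (Xp - B ** U) *v j = Xm *v j' + B *v u \<and> (C ** Xm) *v j = D *v u)"

definition Jstar ::
  "real^'t^'n \<Rightarrow> real^'t^'n \<Rightarrow> real^'t^'m \<Rightarrow> real^'m^'n \<Rightarrow> real^'n^'p \<Rightarrow> real^'m^'p
   \<Rightarrow> (real^'t) set" where
  "Jstar Xm Xp U B C D = (GREATEST J. subspace J \<and> wu_cond Xm Xp U B C D J)"

definition Sigma_data ::
  "real^'t^'n \<Rightarrow> real^'t^'n \<Rightarrow> real^'t^'m \<Rightarrow> real^'m^'n \<Rightarrow> (real^'n^'n) set" where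
  "Sigma_data Xm Xp U B = {A. Xp - B ** U = A ** Xm}"

definition real_eigenvalues :: "real^'k^'k \<Rightarrow> real set" where
  "real_eigenvalues H = {l. \<exists>x. x \<noteq> 0 \<and> H *v x = l *\<^sub>R x}"

definition complex_eigenvalues :: "complex^'k^'k \<Rightarrow> complex set" where
  "complex_eigenvalues H = {l. \<exists>x. x \<noteq> 0 \<and> H *v x = l *s x}"

definition cmat_adj :: "complex^'a^'b \<Rightarrow> complex^'b^'a" where
  "cmat_adj M = (\<chi> i j. cnj (M $ j $ i))"

text \<open>Smallest singular value of a real k x l matrix X: the smallest of its
  min(k,l) singular values, i.e. the square root of the smallest eigenvalue of
  the smaller of the two Gram matrices X X^T (k x k) and X^T X (l x l).\<close>
definition sigma_min_real :: "real^'l^'k \<Rightarrow> real" where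
  "sigma_min_real X =
     (if CARD('k) \<le> CARD('l) then sqrt (Min (real_eigenvalues (X ** transpose X)))
      else sqrt (Min (real_eigenvalues (transpose X ** X))))"

text \<open>Smallest (l-th) singular value of a complex k x l matrix with k \<ge> l:
  square root of the smallest eigenvalue of M^* M (Hermitian psd, real eigenvalues).\<close>
definition sigma_min_tall :: "complex^'l^'k \<Rightarrow> real" where
  "sigma_min_tall M = sqrt (Min (Re ` complex_eigenvalues (cmat_adj M ** M)))"

text \<open>The (n+p) x n complex matrix [lambda I - A; C].\<close>
definition unobs_matrix :: "complex \<Rightarrow> real^'n^'n \<Rightarrow> real^'n^'p \<Rightarrow> complex^'n^('n + 'p)" where
  "unobs_matrix lam A C = (\<chi> r j. case r of
       Inl i \<Rightarrow> (if i = j then lam else 0) - complex_of_real (A $ i $ j)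
     | Inr k \<Rightarrow> complex_of_real (C $ k $ j))"

definition d_unobs :: "real^'n^'n \<Rightarrow> real^'n^'p \<Rightarrow> real" where
  "d_unobs A C = (INF lam\<in>(UNIV::complex set). sigma_min_tall (unobs_matrix lam A C))"

definition d_unobs_set :: "(real^'n^'n) set \<Rightarrow> real^'n^'p \<Rightarrow> real" where
  "d_unobs_set S C = (INF A\<in>S. d_unobs A C)"

definition frob :: "complex^'b^'a \<Rightarrow> real" where
  "frob M = sqrt (\<Sum>i\<in>UNIV. \<Sum>j\<in>UNIV. (cmod (M $ i $ j))\<^sup>2)"

definition data_frob ::
  "complex^'t^'n \<Rightarrow> complex^'t^'n \<Rightarrow> complex^'t^'m \<Rightarrow> complex^'t^'p \<Rightarrow> real" where
  "data_frob dXm dXp dU dY =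
     sqrt ((frob dXm)\<^sup>2 + (frob dXp)\<^sup>2 + (frob dU)\<^sup>2 + (frob dY)\<^sup>2)"

definition cvec :: "real^'a \<Rightarrow> complex^'a" where
  "cvec x = (\<chi> i. complex_of_real (x $ i))"

definition S_plus ::
  "real^'t^'n \<Rightarrow> real^'t^'n \<Rightarrow> real^'t^'m \<Rightarrow> real^'m^'n \<Rightarrow> real^'n^'p \<Rightarrow> real^'m^'p
   \<Rightarrow> (real^'t) set" where
  "S_plus Xm Xp U B C D = orth_compl (Jstar Xm Xp U B C D) \<inter> range (\<lambda>y. transpose Xp *v y)"

definition F_set ::
  "real^'t^'n \<Rightarrow> real^'t^'n \<Rightarrow> real^'t^'m \<Rightarrow> real^'m^'n \<Rightarrow> real^'n^'p \<Rightarrow> real^'m^'p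
   \<Rightarrow> (real^'t) set" where
  "F_set Xm Xp U B C D =
     {v. v \<in> (orth_compl (Jstar Xm Xp U B C D) \<inter> {w. (C ** Xm) *v w = 0}) - {0} \<and>
         Xp *v v \<notin> (\<lambda>j. Xp *v j) ` Jstar Xm Xp U B C D}"

definition Delta_Xp ::
  "real^'t^'n \<Rightarrow> real^'t^'n \<Rightarrow> real^'t^'m \<Rightarrow> real^'m^'n \<Rightarrow> real^'n^'p \<Rightarrow> real^'m^'p
   \<Rightarrow> complex \<Rightarrow> real^'t \<Rightarrow> complex^'t^'n" where
  "Delta_Xp Xm Xp U B C D lam v =
     (let w = lam *s cvec (Xm *v v) - cvec (Xp *v v) + cvec ((B ** U) *v v);
          pr = orth_proj (S_plus Xm Xp U B C D) v;
          zeta = (1 / (norm pr)\<^sup>2) *\<^sub>R pr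
      in (\<chi> i t. w $ i * complex_of_real (zeta $ t)))"

end

theory Submission
  imports Defs
begin


lemma quad_zero:
  fixes a b :: real
  assumes "b \<ge> 0" "\<And>t. 0 \<le> 2*t*a + t^2*b"
  shows "a = 0"
proof -
  define t where "t = -a/(b+1)"
  have "0 \<le> 2*t*a + t^2*b" using assms(2) .
  also have "2*t*a + t^2*b = -(a^2*(b+2))/(b+1)^2"
  proof -
    have bp: "b+1 \<noteq> 0" using assms(1) by simp
    show ?thesis unfolding t_def using bp by (simp add: divide_simps power2_eq_square) (simp add: algebra_simps)
  qed
  finally have "a^2*(b+2) \<le> 0" using assms(1)
    by (simp add: divide_le_0_iff zero_le_divide_iff)
  hence "a^2 \<le> 0" using assms(1) by (smt (verit) mult_le_0_iff zero_le_power2)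
  thus ?thesis by simp
qed

lemma spectral_min:
  fixes f :: "'a::euclidean_space \<Rightarrow> 'a"
  assumes lin: "linear f" and sym: "\<And>x y. inner (f x) y = inner x (f y)"
  shows "finite {l. \<exists>x. x \<noteq> 0 \<and> f x = l *\<^sub>R x}
    \<and> (\<exists>x. x\<noteq>0 \<and> f x = Min {l. \<exists>x. x \<noteq> 0 \<and> f x = l *\<^sub>R x} *\<^sub>R x)
    \<and> (\<forall>y. Min {l. \<exists>x. x \<noteq> 0 \<and> f x = l *\<^sub>R x} * (norm y)^2 \<le> inner y (f y))"
proof -
  define E where "E = {l. \<exists>x. x \<noteq> 0 \<and> f x = l *\<^sub>R x}"
  define q where "q y = inner y (f y)" for y
  have cf: "continuous_on UNIV f" using lin by (simp add: linear_continuous_on linear_linear)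
  have cq: "continuous_on (sphere 0 1) q" unfolding q_def
    by (intro continuous_intros continuous_on_subset[OF cf]) auto
  have ne: "sphere (0::'a) 1 \<noteq> {}"
  proof -
    obtain b :: 'a where "b \<in> Basis" using nonempty_Basis by blast
    hence "b \<in> sphere 0 1" by simp
    thus ?thesis by blast
  qed
  obtain x0 where x0: "x0 \<in> sphere 0 1" and mn: "\<And>y. y \<in> sphere 0 1 \<Longrightarrow> q x0 \<le> q y"
    using continuous_attains_inf[OF compact_sphere ne cq] by blast
  define mu where "mu = q x0"
  have x0n: "norm x0 = 1" using x0 by simp
  have ray: "mu * (norm y)^2 \<le> q y" for y
  proof (cases "y = 0")
    case True thus ?thesis by (simp add: q_def linear_0[OF lin])
  next
    case False
    let ?u = "(1/norm y) *\<^sub>R y"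
    have "?u \<in> sphere 0 1" using False by simp
    hence "mu \<le> q ?u" using mn mu_def by blast
    also have "q ?u = q y / (norm y)^2"
      by (simp add: q_def linear_scale[OF lin] power2_eq_square)
    finally show ?thesis using False by (simp add: field_simps)
  qed
  define g where "g y = f y - mu *\<^sub>R y" for y
  have pq: "inner y (g y) = q y - mu * (norm y)^2" for y
    by (simp add: g_def q_def inner_diff_right power2_norm_eq_inner)
  have glin: "linear g" unfolding g_def by (rule linearI) (simp_all add: linear_add[OF lin] linear_scale[OF lin] algebra_simps)
  have gsym: "inner (g x) y = inner x (g y)" for x y
  proof -
    have "inner (g x) y = inner (f x) y - mu * inner x y" by (simp add: g_def inner_diff_left)
    also have "\<dots> = inner x (f y) - mu * inner x y" using sym by simp
    also have "\<dots> = inner x (g y)" by (simp add: g_def inner_diff_right)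
    finally show ?thesis .
  qed
  have p0: "inner x0 (g x0) = 0" using pq[of x0] x0n mu_def by simp
  have pnn: "inner y (g y) \<ge> 0" for y using pq[of y] ray[of y] by linarith
  have "inner w (g x0) = 0" for w
  proof (rule quad_zero)
    show "inner w (g w) \<ge> 0" by (rule pnn)
    fix t :: real
    have "0 \<le> inner (x0 + t *\<^sub>R w) (g (x0 + t *\<^sub>R w))" by (rule pnn)
    also have "\<dots> = inner x0 (g x0) + t * inner x0 (g w) + t * inner w (g x0) + t^2 * inner w (g w)"
      by (simp add: linear_add[OF glin] linear_scale[OF glin] inner_add_left inner_add_right power2_eq_square algebra_simps)
    also have "\<dots> = 2*t*inner w (g x0) + t^2 * inner w (g w)"
      using p0 gsym[of x0 w] by (simp add: inner_commute)
    finally show "0 \<le> 2*t*inner w (g x0) + t^2 * inner w (g w)" .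
  qed
  hence "g x0 = 0" by (metis inner_eq_zero_iff)
  hence eig: "f x0 = mu *\<^sub>R x0" by (simp add: g_def)
  have x0nz: "x0 \<noteq> 0" using x0n by (metis norm_zero zero_neq_one)
  have muE: "mu \<in> E" unfolding E_def using eig x0nz by (intro CollectI exI[of _ x0]) simp
  have lowb: "mu \<le> l" if lE: "l \<in> E" for l
  proof -
    obtain x where x: "x \<noteq> 0" "f x = l *\<^sub>R x" using lE unfolding E_def by blast
    have "q x = l * (norm x)^2" unfolding q_def x(2) by (simp add: power2_norm_eq_inner)
    hence "mu * (norm x)^2 \<le> l * (norm x)^2" using ray[of x] by linarith
    moreover have "(norm x)^2 > 0" using x(1) by simp
    ultimately show ?thesis by (meson mult_le_cancel_right not_le)
  qed
  define ev where "ev l = (SOME x. x \<noteq> 0 \<and> f x = l *\<^sub>R x)" for l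
  have ev: "ev l \<noteq> 0 \<and> f (ev l) = l *\<^sub>R ev l" if lE: "l \<in> E" for l
  proof -
    have "\<exists>x. x \<noteq> 0 \<and> f x = l *\<^sub>R x" using lE unfolding E_def by simp
    thus ?thesis unfolding ev_def by (rule someI_ex)
  qed
  have inj: "inj_on ev E"
  proof (rule inj_onI)
    fix a b assume ab: "a \<in> E" "b \<in> E" "ev a = ev b"
    have ea: "ev a \<noteq> 0" "f (ev a) = a *\<^sub>R ev a" using ev[OF ab(1)] by blast+
    have "f (ev a) = b *\<^sub>R ev a" using ev[OF ab(2)] ab(3) by simp
    hence "(a - b) *\<^sub>R ev a = 0" using ea(2) by (simp add: scaleR_diff_left)
    thus "a = b" using ea(1) by simp
  qed
  have po: "pairwise orthogonal (ev ` E)"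
  proof (clarsimp simp: pairwise_def)
    fix a b assume ab: "a \<in> E" "b \<in> E" "ev a \<noteq> ev b"
    hence "a \<noteq> b" by metis
    have "a * inner (ev a) (ev b) = inner (f (ev a)) (ev b)" using ev[OF ab(1)] by simp
    also have "\<dots> = inner (ev a) (f (ev b))" by (rule sym)
    also have "\<dots> = b * inner (ev a) (ev b)" using ev[OF ab(2)] by simp
    finally have "inner (ev a) (ev b) = 0" using \<open>a \<noteq> b\<close> by simp
    thus "orthogonal (ev a) (ev b)" by (simp add: orthogonal_def)
  qed
  have "0 \<notin> ev ` E" using ev by auto
  hence "independent (ev ` E)" by (intro pairwise_orthogonal_independent po)
  hence "finite (ev ` E)" using independent_bound by blast
  hence finE: "finite E" using inj finite_imageD by blast
  have "Min E = mu" using finE muE lowb by (intro Min_eqI) auto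
  hence "finite E \<and> (\<exists>x. x\<noteq>0 \<and> f x = Min E *\<^sub>R x) \<and> (\<forall>y. Min E * (norm y)^2 \<le> inner y (f y))"
    using finE eig x0nz ray unfolding q_def by metis
  thus ?thesis unfolding E_def .
qed


lemma real_transp_inner:
  fixes A :: "real^'a::finite^'b::finite"
  shows "inner (transpose A *v u) w = inner u (A *v w)"
  by (simp add: dot_lmul_matrix)

lemma gram_real:
  fixes Y :: "real^'a::finite^'b::finite"
  shows "Min (real_eigenvalues (transpose Y ** Y)) \<ge> 0 \<and>
    (\<forall>y. Min (real_eigenvalues (transpose Y ** Y)) * (norm y)^2 \<le> (norm (Y *v y))^2)"
proof -
  define f where "f x = (transpose Y ** Y) *v x" for x
  have lin: "linear f" unfolding f_def by simp
  have fe: "f x = transpose Y *v (Y *v x)" for x unfolding f_def by (simp add: matrix_vector_mul_assoc)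
  have q: "inner x (f y) = inner (Y *v x) (Y *v y)" for x y
    unfolding fe by (metis real_transp_inner inner_commute)
  have sym: "inner (f x) y = inner x (f y)" for x y
    using q[of x y] q[of y x] by (simp add: inner_commute)
  have E: "real_eigenvalues (transpose Y ** Y) = {l. \<exists>x. x \<noteq> 0 \<and> f x = l *\<^sub>R x}"
    unfolding real_eigenvalues_def f_def by simp
  have sm: "finite {l. \<exists>x. x \<noteq> 0 \<and> f x = l *\<^sub>R x}
    \<and> (\<exists>x. x\<noteq>0 \<and> f x = Min {l. \<exists>x. x \<noteq> 0 \<and> f x = l *\<^sub>R x} *\<^sub>R x)
    \<and> (\<forall>y. Min {l. \<exists>x. x \<noteq> 0 \<and> f x = l *\<^sub>R x} * (norm y)^2 \<le> inner y (f y))"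
    by (rule spectral_min[OF lin sym])
  define m where "m = Min {l. \<exists>x. x \<noteq> 0 \<and> f x = l *\<^sub>R x}"
  obtain x where x: "x \<noteq> 0" "f x = m *\<^sub>R x" using sm m_def by blast
  have "m * (norm x)^2 = (norm (Y *v x))^2"
    using q[of x x] x(2) by (simp add: power2_norm_eq_inner)
  hence "m * (norm x)^2 \<ge> 0" by simp
  hence m0: "m \<ge> 0" using x(1) by (simp add: zero_le_mult_iff)
  have "\<forall>y. m * (norm y)^2 \<le> (norm (Y *v y))^2"
    using sm q unfolding m_def[symmetric] by (simp add: power2_norm_eq_inner)
  thus ?thesis using m0 unfolding E m_def by blast
qed

lemma inner_complex_cnj: "inner (z::complex) w = Re (cnj z * w)"
  by (simp add: inner_complex_def)

lemma cadj:
  fixes M :: "complex^'l::finite^'k::finite"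
  shows "inner (M *v a) b = inner a (cmat_adj M *v b)"
proof -
  have "inner (M *v a) b = Re (\<Sum>i\<in>UNIV. \<Sum>j\<in>UNIV. cnj (M$i$j) * cnj (a$j) * b$i)"
    by (simp add: inner_vec_def matrix_vector_mult_def inner_complex_cnj Re_sum sum_distrib_right)
  also have "\<dots> = Re (\<Sum>j\<in>UNIV. \<Sum>i\<in>UNIV. cnj (M$i$j) * cnj (a$j) * b$i)"
    by (subst sum.swap) simp
  also have "\<dots> = inner a (cmat_adj M *v b)"
    by (simp add: inner_vec_def matrix_vector_mult_def inner_complex_cnj Re_sum sum_distrib_left cmat_adj_def mult.assoc mult.left_commute)
  finally show ?thesis .
qed

lemma cmat_adj_adj [simp]: "cmat_adj (cmat_adj M) = M"
  by (simp add: cmat_adj_def vec_eq_iff)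

lemma inner_smult_same:
  fixes x :: "complex^'n::finite"
  shows "inner (c *s x) (d *s x) = Re (cnj c * d) * (norm x)^2"
proof -
  have t: "inner (c * z) (d * z) = Re (cnj c * d) * inner z z" for z :: complex
    by (simp add: inner_complex_def) algebra
  show ?thesis
    by (simp add: inner_vec_def t sum_distrib_left power2_norm_eq_inner[of x])
qed

lemma cvec_scaleR: "(complex_of_real r) *s (x::complex^'n) = r *\<^sub>R x"
  unfolding vec_eq_iff by (intro allI) (simp only: vector_scaleR_component vector_smult_component, simp add: scaleR_conv_of_real)

lemma cmat_smult: "(H::complex^'n^'m) *v (c *s x) = c *s (H *v x)"
  by (simp add: vec_eq_iff matrix_vector_mult_def sum_distrib_left algebra_simps)

lemma gram_complex:
  fixes M :: "complex^'l::finite^'k::finite"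
  shows "Min (Re ` complex_eigenvalues (cmat_adj M ** M)) \<ge> 0 \<and>
    (\<forall>y. Min (Re ` complex_eigenvalues (cmat_adj M ** M)) * (norm y)^2 \<le> (norm (M *v y))^2)"
proof -
  define H where "H = cmat_adj M ** M"
  define f where "f x = H *v x" for x
  have lin: "linear f" unfolding f_def by simp
  have fe: "f x = cmat_adj M *v (M *v x)" for x unfolding f_def H_def by (simp add: matrix_vector_mul_assoc)
  have q: "inner x (f y) = inner (M *v x) (M *v y)" for x y
    unfolding fe by (metis cadj cmat_adj_adj inner_commute)
  have sym: "inner (f x) y = inner x (f y)" for x y
    using q[of x y] q[of y x] by (simp add: inner_commute)
  have E: "Re ` complex_eigenvalues H = {l. \<exists>x. x \<noteq> 0 \<and> f x = l *\<^sub>R x}"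
  proof (intro equalityI subsetI)
    fix r assume "r \<in> Re ` complex_eigenvalues H"
    then obtain l x where lx: "r = Re l" "x \<noteq> 0" "H *v x = l *s x"
      unfolding complex_eigenvalues_def by blast
    have "Im l * (norm x)^2 = inner (f x) (\<i> *s x)"
      using lx(3) by (simp add: f_def inner_smult_same)
    also have "\<dots> = inner x (f (\<i> *s x))" by (rule sym)
    also have "\<dots> = - Im l * (norm x)^2"
      using lx(3) by (simp add: f_def cmat_smult vector_smult_assoc inner_smult_same[of 1, simplified])
    finally have "Im l = 0" using lx(2) by simp
    hence "l = complex_of_real r" using lx(1) by (simp add: complex_eq_iff)
    hence "f x = r *\<^sub>R x" using lx(3) by (simp add: f_def cvec_scaleR)
    thus "r \<in> {l. \<exists>x. x \<noteq> 0 \<and> f x = l *\<^sub>R x}" using lx(2) by blast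
  next
    fix r assume "r \<in> {l. \<exists>x. x \<noteq> 0 \<and> f x = l *\<^sub>R x}"
    then obtain x where x: "x \<noteq> 0" "f x = r *\<^sub>R x" by blast
    hence "H *v x = complex_of_real r *s x" by (simp add: f_def cvec_scaleR)
    hence "complex_of_real r \<in> complex_eigenvalues H" using x(1) unfolding complex_eigenvalues_def by blast
    thus "r \<in> Re ` complex_eigenvalues H" by force
  qed
  have sm: "finite {l. \<exists>x. x \<noteq> 0 \<and> f x = l *\<^sub>R x}
    \<and> (\<exists>x. x\<noteq>0 \<and> f x = Min {l. \<exists>x. x \<noteq> 0 \<and> f x = l *\<^sub>R x} *\<^sub>R x)
    \<and> (\<forall>y. Min {l. \<exists>x. x \<noteq> 0 \<and> f x = l *\<^sub>R x} * (norm y)^2 \<le> inner y (f y))"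
    by (rule spectral_min[OF lin sym])
  define m where "m = Min {l. \<exists>x. x \<noteq> 0 \<and> f x = l *\<^sub>R x}"
  obtain x where x: "x \<noteq> 0" "f x = m *\<^sub>R x" using sm m_def by blast
  have "m * (norm x)^2 = (norm (M *v x))^2"
    using q[of x x] x(2) by (simp add: power2_norm_eq_inner)
  hence "m * (norm x)^2 \<ge> 0" by simp
  hence m0: "m \<ge> 0" using x(1) by (simp add: zero_le_mult_iff)
  have "\<forall>y. m * (norm y)^2 \<le> (norm (M *v y))^2"
    using sm q unfolding m_def[symmetric] by (simp add: power2_norm_eq_inner)
  thus ?thesis using m0 unfolding E[unfolded H_def] m_def by blast
qed



lemma real_transp_inner2:
  fixes A :: "real^'a::finite^'b::finite"
  shows "inner (transpose A *v u) w = inner u (A *v w)"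
  by (simp add: dot_lmul_matrix)

lemma ker_perp:
  fixes X :: "real^'t::finite^'n::finite"
  assumes "\<forall>k. X *v k = 0 \<longrightarrow> inner v k = 0"
  shows "v \<in> range (\<lambda>y. transpose X *v y)"
proof -
  let ?R = "range (\<lambda>y. transpose X *v y)"
  have sR: "subspace ?R" by (intro linear_subspace_image matrix_vector_mul_linear subspace_UNIV)
  obtain p q where p: "p \<in> span ?R" and q: "\<And>w. w \<in> span ?R \<Longrightarrow> orthogonal q w" and v: "v = p + q"
    using orthogonal_subspace_decomp_exists[of ?R v] by blast
  have spR: "span ?R = ?R" using sR by simp
  have mem: "transpose X *v (X *v q) \<in> span ?R" using spR by blast
  have e: "inner (X *v q) (X *v q) = inner q (transpose X *v (X *v q))"
    using real_transp_inner2[of "transpose X" q "X *v q"] by (simp only: transpose_transpose)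
  have "inner (X *v q) (X *v q) = 0" using q[OF mem] unfolding e orthogonal_def .
  hence "X *v q = 0" by simp
  hence "inner v q = 0" using assms by blast
  moreover have "inner p q = 0" using q[OF p] by (simp add: orthogonal_def inner_commute)
  ultimately have "inner q q = 0" using v by (simp add: inner_add_left)
  hence "q = 0" by simp
  hence vp: "v = p" using v by simp
  have "p \<in> ?R" using p spR by (simp only:)
  thus ?thesis using vp by (simp only:)
qed

lemma orth_proj_props:
  fixes S :: "'a::euclidean_space set"
  assumes "subspace S"
  shows "orth_proj S v \<in> S \<and> (\<forall>s\<in>S. inner (v - orth_proj S v) s = 0)"
proof -
  obtain y z where y: "y \<in> span S" and z: "\<And>w. w \<in> span S \<Longrightarrow> orthogonal z w" and v: "v = y + z"
    using orthogonal_subspace_decomp_exists[of S v] by blast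
  have sp: "span S = S" using assms by simp
  have ex: "\<exists>!w. w \<in> S \<and> (\<forall>s\<in>S. inner (v - w) s = 0)"
  proof (rule ex1I[of _ y])
    show "y \<in> S \<and> (\<forall>s\<in>S. inner (v - y) s = 0)"
      using y z v sp by (auto simp: orthogonal_def)
  next
    fix w2 assume a: "w2 \<in> S \<and> (\<forall>s\<in>S. inner (v - w2) s = 0)"
    have a1: "y \<in> S \<and> (\<forall>s\<in>S. inner (v - y) s = 0)"
      using y z v sp by (auto simp: orthogonal_def)
    have d: "w2 - y \<in> S" using a a1 assms by (simp add: subspace_diff)
    have "inner (w2 - y) (w2 - y) = inner (v - y) (w2 - y) - inner (v - w2) (w2 - y)"
      by (simp add: inner_diff_left)
    also have "\<dots> = 0" using a a1 d by simp
    finally show "w2 = y" by simp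
  qed
  show ?thesis unfolding orth_proj_def by (rule theI'[OF ex])
qed

lemma wu_sum:
  assumes "wu_cond Xm Xp U B C D J1" "wu_cond Xm Xp U B C D J2"
  shows "wu_cond Xm Xp U B C D {x + y |x y. x \<in> J1 \<and> y \<in> J2}"
  unfolding wu_cond_def
proof
  fix j assume "j \<in> {x + y |x y. x \<in> J1 \<and> y \<in> J2}"
  then obtain a b where ab: "j = a + b" "a \<in> J1" "b \<in> J2" by blast
  obtain a' ua where a': "a' \<in> J1" "(Xp - B ** U) *v a = Xm *v a' + B *v ua" "(C ** Xm) *v a = D *v ua"
    using assms(1) ab(2) unfolding wu_cond_def by blast
  obtain b' ub where b': "b' \<in> J2" "(Xp - B ** U) *v b = Xm *v b' + B *v ub" "(C ** Xm) *v b = D *v ub"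
    using assms(2) ab(3) unfolding wu_cond_def by blast
  have "a' + b' \<in> {x + y |x y. x \<in> J1 \<and> y \<in> J2}" using a' b' by blast
  moreover have "(Xp - B ** U) *v j = Xm *v (a' + b') + B *v (ua + ub)"
    using a' b' ab by (simp add: matrix_vector_right_distrib)
  moreover have "(C ** Xm) *v j = D *v (ua + ub)"
    using a' b' ab by (simp add: matrix_vector_right_distrib)
  ultimately show "\<exists>j'\<in>{x + y |x y. x \<in> J1 \<and> y \<in> J2}. \<exists>u. (Xp - B ** U) *v j = Xm *v j' + B *v u \<and> (C ** Xm) *v j = D *v u"
    by blast
qed

lemma Jstar_props:
  fixes Xm Xp :: "real^'t::finite^'n::finite"
    and U :: "real^'t^'m::finite"
    and B :: "real^'m^'n"
    and C :: "real^'n^'p::finite"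
    and D :: "real^'m^'p"
  shows "subspace (Jstar Xm Xp U B C D) \<and>
    (\<forall>J. subspace J \<and> wu_cond Xm Xp U B C D J \<longrightarrow> J \<subseteq> Jstar Xm Xp U B C D)"
proof -
  define P where "P J = (subspace J \<and> wu_cond Xm Xp U B C D J)" for J :: "(real^'t) set"
  have P0: "P {0}" unfolding P_def wu_cond_def by (auto intro!: exI[of _ "0::real^'m"])
  have "\<forall>J. P J \<longrightarrow> dim J < DIM(real^'t) + 1"
    using dim_subset_UNIV by (metis less_Suc_eq_le Suc_eq_plus1)
  then obtain J0 where J0: "P J0" and mx: "\<And>J. P J \<Longrightarrow> dim J \<le> dim J0"
    using ex_has_greatest_nat[of P "{0}" dim] P0 by blast
  have all: "J \<subseteq> J0" if PJ: "P J" for J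
  proof -
    let ?S = "{x + y |x y. x \<in> J0 \<and> y \<in> J}"
    have PS: "P ?S" using J0 PJ unfolding P_def by (simp add: subspace_sums wu_sum)
    have "J0 \<subseteq> ?S"
    proof
      fix x assume "x \<in> J0"
      moreover have "0 \<in> J" using PJ unfolding P_def by (simp add: subspace_0)
      ultimately show "x \<in> ?S" by force
    qed
    hence "J0 = ?S" using PS J0 mx[OF PS] unfolding P_def by (intro subspace_dim_equal) auto
    moreover have "J \<subseteq> ?S"
    proof
      fix y assume "y \<in> J"
      moreover have "0 \<in> J0" using J0 unfolding P_def by (simp add: subspace_0)
      ultimately show "y \<in> ?S" by force
    qed
    ultimately show ?thesis by simp
  qed
  have "Jstar Xm Xp U B C D = J0"
    unfolding Jstar_def P_def[symmetric] using J0 all by (intro Greatest_equality) auto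
  thus ?thesis using J0 all unfolding P_def by auto
qed

lemma nsq: "(norm (x::'a::real_inner^'n::finite))^2 = (\<Sum>i\<in>UNIV. (norm (x$i))^2)"
  by (simp add: power2_norm_eq_inner inner_vec_def)

lemma norm_cvec: "norm (cvec x) = norm x"
proof -
  have "(norm (cvec x))^2 = (norm x)^2" by (simp add: nsq cvec_def)
  thus ?thesis by (simp add: power2_eq_iff_nonneg)
qed

lemma cvec_diff: "cvec (a - b) = cvec a - cvec b" by (simp add: cvec_def vec_eq_iff)
lemma cvec_add: "cvec (a + b) = cvec a + cvec b" by (simp add: cvec_def vec_eq_iff)

lemma unobs_norm:
  fixes A :: "real^'n::finite^'n" and C :: "real^'n^'p::finite"
  assumes "C *v x = 0"
  shows "norm (unobs_matrix lam A C *v cvec x) = norm (lam *s cvec x - cvec (A *v x))"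
proof -
  let ?y = "unobs_matrix lam A C *v cvec x"
  let ?w = "lam *s cvec x - cvec (A *v x)"
  have c1: "?y $ Inl i = ?w $ i" for i
  proof -
    have "?y $ Inl i = (\<Sum>j\<in>UNIV. ((if i = j then lam else 0) - complex_of_real (A$i$j)) * complex_of_real (x$j))"
      by (simp add: unobs_matrix_def matrix_vector_mult_def cvec_def)
    also have "\<dots> = (\<Sum>j\<in>UNIV. (if i = j then lam * complex_of_real (x$j) else 0)) - (\<Sum>j\<in>UNIV. complex_of_real (A$i$j) * complex_of_real (x$j))"
      by (subst sum_subtractf[symmetric]) (rule sum.cong, auto simp: left_diff_distrib)
    also have "\<dots> = ?w $ i"
      by (simp add: matrix_vector_mult_def cvec_def)
    finally show ?thesis .
  qed
  have c2: "?y $ Inr k = 0" for k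
  proof -
    have "?y $ Inr k = complex_of_real ((C *v x) $ k)"
      by (simp add: unobs_matrix_def matrix_vector_mult_def cvec_def)
    thus ?thesis using assms by simp
  qed
  have "(norm ?y)^2 = (\<Sum>r\<in>UNIV <+> UNIV. (norm (?y $ r))^2)" by (simp add: nsq)
  also have "\<dots> = (\<Sum>i\<in>UNIV. (norm (?y $ Inl i))^2) + (\<Sum>k\<in>UNIV. (norm (?y $ Inr k))^2)"
    by (subst sum.Plus) auto
  also have "\<dots> = (norm ?w)^2" by (simp add: c1 c2 nsq)
  finally show ?thesis by (simp add: power2_eq_iff_nonneg)
qed

lemma frob_outer:
  fixes w :: "complex^'n::finite" and z :: "real^'t::finite"
  shows "frob ((\<chi> i t. w $ i * complex_of_real (z $ t)) :: complex^'t^'n) = norm w * norm z"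
proof -
  have "frob ((\<chi> i t. w $ i * complex_of_real (z $ t)) :: complex^'t^'n)
      = sqrt (\<Sum>i\<in>UNIV. \<Sum>t\<in>UNIV. (norm (w$i))^2 * (norm (z$t))^2)"
    by (simp add: frob_def norm_mult power_mult_distrib)
  also have "\<dots> = sqrt ((norm w)^2 * (norm z)^2)"
    by (simp add: nsq sum_distrib_left sum_distrib_right) (rule sum.swap)
  also have "\<dots> = norm w * norm z" by (simp add: real_sqrt_mult)
  finally show ?thesis .
qed



lemma sqrt_bound:
  fixes c a b :: real
  assumes "c \<ge> 0" "c * a^2 \<le> b^2" "b \<ge> 0"
  shows "sqrt c * a \<le> b"
proof (rule power2_le_imp_le)
  show "(sqrt c * a)^2 \<le> b^2" using assms by (simp add: power_mult_distrib)
qed (rule assms(3))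

lemma sigma_real:
  fixes X :: "real^'t::finite^'n::finite"
  assumes "\<forall>k. X *v k = 0 \<longrightarrow> inner v k = 0"
  shows "sigma_min_real X \<ge> 0 \<and> sigma_min_real X * norm v \<le> norm (X *v v)"
proof (cases "CARD('n) \<le> CARD('t)")
  case True
  define c where "c = Min (real_eigenvalues (X ** transpose X))"
  have g: "c \<ge> 0 \<and> (\<forall>y. c * (norm y)^2 \<le> (norm (transpose X *v y))^2)"
    using gram_real[of "transpose X"] unfolding c_def by simp
  obtain y where vy: "v = transpose X *v y" using ker_perp[OF assms] by blast
  define z where "z = X *v v"
  have t: "inner (transpose X *v y) v = inner y (X *v v)" by (rule real_transp_inner)
  have "inner v v = inner (transpose X *v y) v" using vy by (simp only:)
  hence n1: "inner v v = inner y z"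
    unfolding z_def using t by (rule trans)
  have gy: "c * (norm y)^2 \<le> (norm v)^2" using g vy by metis
  define h where "h = z - c *\<^sub>R y"
  have hy: "inner y h \<ge> 0"
  proof -
    have "inner y h = inner v v - c * inner y y"
      by (simp add: h_def n1 inner_diff_right)
    thus ?thesis using gy by (simp add: power2_norm_eq_inner)
  qed
  have "inner h h + c * inner h y = inner h z" by (simp add: h_def inner_diff_left inner_diff_right algebra_simps)
  also have "\<dots> = inner z z - c * inner y z" by (simp add: h_def inner_diff_left)
  also have "\<dots> = (norm z)^2 - c * (norm v)^2" by (simp add: n1[symmetric] power2_norm_eq_inner)
  finally have "c * (norm v)^2 \<le> (norm z)^2" using g hy
    by (smt (verit) inner_commute inner_ge_zero mult_nonneg_nonneg)
  hence "sqrt c * norm v \<le> norm z" using g by (intro sqrt_bound) auto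
  moreover have "sigma_min_real X = sqrt c" using True unfolding sigma_min_real_def c_def by simp
  ultimately show ?thesis using g z_def by simp
next
  case False
  define c where "c = Min (real_eigenvalues (transpose X ** X))"
  have g: "c \<ge> 0 \<and> (\<forall>y. c * (norm y)^2 \<le> (norm (X *v y))^2)"
    using gram_real[of X] unfolding c_def by simp
  hence "sqrt c * norm v \<le> norm (X *v v)" by (intro sqrt_bound) auto
  moreover have "sigma_min_real X = sqrt c" using False unfolding sigma_min_real_def c_def by simp
  ultimately show ?thesis using g by simp
qed

lemma sigma_tall:
  fixes M :: "complex^'l::finite^'k::finite"
  shows "sigma_min_tall M \<ge> 0 \<and> sigma_min_tall M * norm y \<le> norm (M *v y)"
proof -
  define c where "c = Min (Re ` complex_eigenvalues (cmat_adj M ** M))"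
  have g: "c \<ge> 0 \<and> (\<forall>y. c * (norm y)^2 \<le> (norm (M *v y))^2)"
    using gram_complex[of M] unfolding c_def by simp
  hence "sqrt c * norm y \<le> norm (M *v y)" by (intro sqrt_bound) auto
  moreover have "sigma_min_tall M = sqrt c" unfolding sigma_min_tall_def c_def by simp
  ultimately show ?thesis using g by simp
qed

theorem theorem2:
  fixes Xm Xp :: "real^'t::finite^'n::finite"
    and U :: "real^'t^'m::finite"
    and B :: "real^'m^'n"
    and C :: "real^'n^'p::finite"
    and D :: "real^'m^'p"
  assumes "Sigma_data Xm Xp U B \<noteq> {}"
  shows "(INF z\<in>(UNIV::complex set) \<times> F_set Xm Xp U B C D.
            ereal (data_frob (0::complex^'t^'n) (Delta_Xp Xm Xp U B C D (fst z) (snd z))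
                     (0::complex^'t^'m) (0::complex^'t^'p)))
         \<ge> ereal (d_unobs_set (Sigma_data Xm Xp U B) C * sigma_min_real Xm)"
proof -
  obtain A where A: "Xp - B ** U = A ** Xm" using assms unfolding Sigma_data_def by blast
  define J where "J = Jstar Xm Xp U B C D"
  have Jp: "subspace J" "\<And>J'. subspace J' \<Longrightarrow> wu_cond Xm Xp U B C D J' \<Longrightarrow> J' \<subseteq> J"
    using Jstar_props[of Xm Xp U B C D] unfolding J_def by blast+
  have kerJ: "{k. Xm *v k = 0} \<subseteq> J"
  proof (rule Jp(2))
    show "subspace {k. Xm *v k = 0}" by (rule linear_subspace_kernel) simp
    show "wu_cond Xm Xp U B C D {k. Xm *v k = 0}"
      unfolding wu_cond_def
    proof
      fix j assume "j \<in> {k. Xm *v k = 0}"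
      hence j: "Xm *v j = 0" by simp
      have "(Xp - B ** U) *v j = Xm *v 0 + B *v 0"
        unfolding A by (simp add: matrix_vector_mul_assoc[symmetric] j)
      moreover have "(C ** Xm) *v j = D *v 0"
        by (simp add: matrix_vector_mul_assoc[symmetric] j)
      ultimately show "\<exists>j'\<in>{k. Xm *v k = 0}. \<exists>u. (Xp - B ** U) *v j = Xm *v j' + B *v u \<and> (C ** Xm) *v j = D *v u"
        by (intro bexI[of _ 0] exI[of _ 0]) auto
    qed
  qed
  define dd where "dd = d_unobs_set (Sigma_data Xm Xp U B) C"
  define sg where "sg = sigma_min_real Xm"
  have tall0: "\<And>N::complex^'n^('n+'p). sigma_min_tall N \<ge> 0" using sigma_tall by blast
  have dA0: "d_unobs A' C \<ge> 0" for A' :: "real^'n^'n"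
    unfolding d_unobs_def by (rule cINF_greatest) (auto simp: tall0)
  have ddA: "dd \<le> d_unobs A C"
    unfolding dd_def d_unobs_set_def
    by (rule cINF_lower) (auto intro!: bdd_belowI2[where m=0] dA0 simp: Sigma_data_def A)
  have key: "dd * sg \<le> data_frob (0::complex^'t^'n) (Delta_Xp Xm Xp U B C D lam v)
                     (0::complex^'t^'m) (0::complex^'t^'p)"
    if vF: "v \<in> F_set Xm Xp U B C D" for lam v
  proof -
    have vJ: "\<forall>y\<in>J. inner v y = 0" and cx: "(C ** Xm) *v v = 0" and v0: "v \<noteq> 0"
      and nX: "Xp *v v \<notin> (\<lambda>j. Xp *v j) ` J"
      using vF unfolding F_set_def orth_compl_def J_def by auto
    define x where "x = Xm *v v"
    have Cx: "C *v x = 0" using cx by (simp add: x_def matrix_vector_mul_assoc)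
    have kperp: "\<forall>k. Xm *v k = 0 \<longrightarrow> inner v k = 0" using kerJ vJ by blast
    have x0: "x \<noteq> 0"
    proof
      assume "x = 0"
      hence "inner v v = 0" using kperp[rule_format, of v] x_def by simp
      thus False using v0 by simp
    qed
    have sr: "sg \<ge> 0" "sg * norm v \<le> norm x"
      using sigma_real[OF kperp] unfolding sg_def x_def by auto
    define S where "S = S_plus Xm Xp U B C D"
    have oc: "subspace (orth_compl J)"
      unfolding subspace_def orth_compl_def by (simp add: inner_add_left)
    have S_eq: "S = orth_compl J \<inter> range (\<lambda>y. transpose Xp *v y)"
      unfolding S_def S_plus_def J_def ..
    have sS: "subspace S" unfolding S_eq
      by (intro subspace_inter oc linear_subspace_image matrix_vector_mul_linear subspace_UNIV)
    define pr where "pr = orth_proj S v"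
    have prp: "pr \<in> S" "\<forall>s\<in>S. inner (v - pr) s = 0"
      using orth_proj_props[OF sS, of v] unfolding pr_def by auto
    have pr0: "pr \<noteq> 0"
    proof
      assume pz: "pr = 0"
      define W where "W = {a + b |a b. a \<in> J \<and> b \<in> {k. Xp *v k = 0}}"
      have skp: "subspace {k. Xp *v k = 0}" by (rule linear_subspace_kernel) simp
      have sW: "subspace W" unfolding W_def by (intro subspace_sums Jp(1) skp)
      obtain p q where p: "p \<in> span W" and q: "\<And>w. w \<in> span W \<Longrightarrow> orthogonal q w" and v: "v = p + q"
        using orthogonal_subspace_decomp_exists[of W v] by blast
      have spW: "span W = W" using sW by simp
      have J0: "0 \<in> J" using Jp(1) by (simp add: subspace_0)
      have qJ: "inner q a = 0" if "a \<in> J" for a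
      proof -
        have "a \<in> W" unfolding W_def using that by (intro CollectI exI[of _ a] exI[of _ 0]) simp
        hence "a \<in> span W" by (rule span_base)
        thus ?thesis using q by (simp add: orthogonal_def)
      qed
      have qK: "\<forall>k. Xp *v k = 0 \<longrightarrow> inner q k = 0"
      proof (intro allI impI)
        fix k assume "Xp *v k = 0"
        hence "k \<in> W" unfolding W_def using J0 by (intro CollectI exI[of _ 0] exI[of _ k]) simp
        hence "k \<in> span W" by (rule span_base)
        thus "inner q k = 0" using q by (simp add: orthogonal_def)
      qed
      have "q \<in> S" unfolding S_eq orth_compl_def using qJ ker_perp[OF qK] by blast
      hence "inner v q = 0" using prp(2) pz by simp
      moreover have "inner p q = 0" using q[OF p] by (simp add: orthogonal_def inner_commute)
      ultimately have "inner q q = 0" using v by (simp add: inner_add_left)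
      hence "v = p" using v by simp
      hence "v \<in> W" using p spW by simp
      then obtain a b where ab: "v = a + b" "a \<in> J" "Xp *v b = 0" unfolding W_def by blast
      hence "Xp *v v = Xp *v a" by (simp add: matrix_vector_right_distrib)
      thus False using nX ab(2) by blast
    qed
    have npv: "norm pr \<le> norm v"
    proof -
      have "inner pr pr = inner v pr" using prp by (simp add: inner_diff_left)
      also have "\<dots> \<le> norm v * norm pr" by (rule norm_cauchy_schwarz)
      finally have "norm pr * norm pr \<le> norm v * norm pr" by (simp add: power2_norm_eq_inner[symmetric] power2_eq_square)
      thus ?thesis using pr0 by simp
    qed
    define M where "M = unobs_matrix lam A C"
    define w where "w = lam *s cvec x - cvec (A *v x)"
    have st: "sigma_min_tall M \<ge> 0" "sigma_min_tall M * norm (cvec x) \<le> norm (M *v cvec x)"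
      using sigma_tall by blast+
    have Mw: "norm (M *v cvec x) = norm w" unfolding M_def w_def by (rule unobs_norm[OF Cx])
    have dA: "d_unobs A C \<le> sigma_min_tall M"
      unfolding d_unobs_def M_def
      by (rule cINF_lower) (auto intro!: bdd_belowI2[where m=0] tall0)
    have wdef: "lam *s cvec (Xm *v v) - cvec (Xp *v v) + cvec ((B ** U) *v v) = w"
    proof -
      have "(Xp - B ** U) *v v = A *v x" unfolding A x_def by (simp add: matrix_vector_mul_assoc)
      hence "cvec (Xp *v v) - cvec ((B ** U) *v v) = cvec (A *v x)"
        by (metis matrix_vector_mult_diff_rdistrib cvec_diff)
      thus ?thesis unfolding w_def x_def by (simp add: algebra_simps)
    qed
    have frobv: "data_frob (0::complex^'t^'n) (Delta_Xp Xm Xp U B C D lam v) (0::complex^'t^'m) (0::complex^'t^'p)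
        = norm w / norm pr"
    proof -
      have dx: "Delta_Xp Xm Xp U B C D lam v = (\<chi> i t. w $ i * complex_of_real (((1 / (norm pr)^2) *\<^sub>R pr) $ t))"
        unfolding Delta_Xp_def Let_def wdef pr_def S_def ..
      have "frob (Delta_Xp Xm Xp U B C D lam v) = norm w * norm ((1 / (norm pr)^2) *\<^sub>R pr)"
        unfolding dx by (rule frob_outer)
      also have "\<dots> = norm w / norm pr" using pr0 by (simp add: power2_eq_square)
      finally have fe: "frob (Delta_Xp Xm Xp U B C D lam v) = norm w / norm pr" .
      have z1: "frob (0::complex^'t^'n) = 0" "frob (0::complex^'t^'m) = 0" "frob (0::complex^'t^'p) = 0"
        by (simp_all add: frob_def)
      show ?thesis unfolding data_frob_def z1 fe by simp
    qed
    define s where "s = sigma_min_tall M"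
    have nxc: "norm (cvec x) = norm x" by (rule norm_cvec)
    have "dd * sg \<le> s * sg" using ddA dA sr(1) unfolding s_def by (intro mult_right_mono) auto
    moreover have "s * sg * norm pr \<le> norm w"
    proof -
      have "s * sg * norm pr \<le> s * (sg * norm v)"
        using npv st(1) sr(1) unfolding s_def by (simp add: mult_left_mono mult.assoc)
      also have "\<dots> \<le> s * norm x" using sr(2) st(1) unfolding s_def by (simp add: mult_left_mono)
      also have "\<dots> \<le> norm w" using st(2) Mw nxc unfolding s_def by simp
      finally show ?thesis .
    qed
    ultimately have "dd * sg * norm pr \<le> norm w"
      by (meson mult_right_mono norm_ge_zero order_trans)
    hence "dd * sg \<le> norm w / norm pr" using pr0 by (simp add: pos_le_divide_eq)
    thus ?thesis unfolding frobv .
  qed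
  show ?thesis
    unfolding dd_def[symmetric] sg_def[symmetric]
    by (rule INF_greatest) (auto simp: key)
qed

end
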